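(* In the formal power series ring $\mathbb Q[[u,v,z]]$, $$\sum_{k,l,n\geq 0}\{E_kE_l\}_n\,u^kv^lz^n=\frac{(1+z)(1+uvz)}{(1-uz)(1-vz)}.$$
   Context: For $i\geq1$, $X_i$ is the class function with $X_i(\sigma)$ = number of $i$-cycles of $\sigma$. For a partition $\alpha=1^{a_1}2^{a_2}\cdots$ ($a_i$ = number of parts equal to $i$, $|\alpha|=\sum ia_i$, $l(\alpha)=\sum a_i$) let $\binom X\alpha=\prod_i\binom{X_i}{a_i}$. For $l\geq0$ let $E_l=\sum_{\alpha\vdash l}(-1)^{|\alpha|-l(\alpha)}\binom X\alpha\in\mathbb C[X_1,X_2,\dotsc]$ (the character polynomial of $\bigwedge^l\mathbb C^n$; $E_0=1$). For $p\in\mathbb C[X_1,X_2,\dotsc]$ the signed moment is $\{p\}_n=\frac1{n!}\sum_{\sigma\in S_n}\mathrm{sgn}(\sigma)p(X_1(\sigma),X_2(\sigma),\dotsc)$, $n\geq0$. *)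

theory Defs
  imports "HOL-Combinatorics.Permutations" "HOL-Computational_Algebra.Formal_Power_Series"
begin

definition cycle_count :: "(nat \<Rightarrow> nat) \<Rightarrow> nat \<Rightarrow> nat \<Rightarrow> nat" where
  "cycle_count \<sigma> n i =
     card {C. \<exists>x<n. C = {(\<sigma> ^^ k) x | k. True} \<and> card C = i}"

text \<open>Partitions of l, encoded by multiplicity functions a (a i = number of parts equal to i).\<close>
definition partition_mults :: "nat \<Rightarrow> (nat \<Rightarrow> nat) set" where
  "partition_mults l = {a. (\<forall>i. a i \<noteq> 0 \<longrightarrow> 1 \<le> i \<and> i \<le> l) \<and> (\<Sum>i=1..l. i * a i) = l}"

definition num_parts :: "nat \<Rightarrow> (nat \<Rightarrow> nat) \<Rightarrow> nat" where
  "num_parts l a = (\<Sum>i=1..l. a i)"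

text \<open>The character polynomial E_l, as a function of the values X = (X_1, X_2, ...).\<close>
definition charE :: "nat \<Rightarrow> (nat \<Rightarrow> nat) \<Rightarrow> rat" where
  "charE l X = (\<Sum>a\<in>partition_mults l.
      (-1) ^ (l - num_parts l a) * (\<Prod>i=1..l. of_nat (X i choose a i)))"

definition signed_moment :: "((nat \<Rightarrow> nat) \<Rightarrow> rat) \<Rightarrow> nat \<Rightarrow> rat" where
  "signed_moment p n = (1 / fact n) *
     (\<Sum>\<sigma>\<in>{\<sigma>. \<sigma> permutes {0..<n}}. of_int (sign \<sigma>) * p (cycle_count \<sigma> n))"

text \<open>Q[[u,v,z]] realised as ((Q[[u]])[[v]])[[z]].\<close>
definition fu :: "rat fps fps fps" where "fu = fps_const (fps_const fps_X)"
definition fv :: "rat fps fps fps" where "fv = fps_const fps_X"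
definition fz :: "rat fps fps fps" where "fz = fps_X"

end

theory Submission
  imports Defs "HOL-Combinatorics.Cycles"
begin

unbundle fps_syntax


lemma pm_supp: "a \<in> partition_mults k \<Longrightarrow> a i \<noteq> 0 \<Longrightarrow> 1 \<le> i \<and> i \<le> k"
  by (simp add: partition_mults_def)

lemma pm_sum: "a \<in> partition_mults k \<Longrightarrow> (\<Sum>i=1..k. i * a i) = k"
  by (simp add: partition_mults_def)

lemma pm_le: "a \<in> partition_mults k \<Longrightarrow> i \<in> {1..k} \<Longrightarrow> i * a i \<le> k"
  using member_le_sum[of i "{1..k}" "\<lambda>i. i * a i"] pm_sum[of a k] by simp

lemma finite_pm: "finite (partition_mults k)"
proof (rule finite_subset)
  show "partition_mults k \<subseteq> {f. \<forall>x. (x \<in> {1..k} \<longrightarrow> f x \<in> {0..k}) \<and> (x \<notin> {1..k} \<longrightarrow> f x = 0)}"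
  proof safe
    fix a x assume a: "a \<in> partition_mults k" and x: "x \<in> {1..k}"
    have "x * a x \<le> k" using pm_le[OF a x] .
    moreover have "1 * a x \<le> x * a x" using x by (intro mult_le_mono1) simp
    ultimately have "a x \<le> k" by (metis le_trans mult_1)
    then show "a x \<in> {0..k}" by simp
  next
    fix a x assume a: "a \<in> partition_mults k" and x: "x \<notin> {1..k}"
    then show "a x = 0" using pm_supp[OF a, of x] by auto
  qed
qed (rule finite_set_of_finite_funs; simp)

lemma sum_supp:
  fixes a :: "nat \<Rightarrow> nat" and L L' :: nat and f :: "nat \<Rightarrow> nat \<Rightarrow> 'b::comm_monoid_add"
  assumes "\<And>i. a i \<noteq> 0 \<Longrightarrow> i \<le> L" "L \<le> L'" "\<And>i. f i 0 = 0"
  shows "(\<Sum>i=1..L'. f i (a i)) = (\<Sum>i=1..L. f i (a i))"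
proof (rule sum.mono_neutral_right)
  show "\<forall>i\<in>{1..L'} - {1..L}. f i (a i) = 0"
  proof
    fix i assume "i \<in> {1..L'} - {1..L}"
    then have "\<not> i \<le> L" by auto
    then have "a i = 0" using assms(1) by blast
    then show "f i (a i) = 0" using assms(3) by simp
  qed
qed (use assms(2) in auto)

lemma prod_supp:
  fixes a :: "nat \<Rightarrow> nat" and L L' :: nat and f :: "nat \<Rightarrow> nat \<Rightarrow> 'b::comm_monoid_mult"
  assumes "\<And>i. a i \<noteq> 0 \<Longrightarrow> i \<le> L" "L \<le> L'" "\<And>i. f i 0 = 1"
  shows "(\<Prod>i=1..L'. f i (a i)) = (\<Prod>i=1..L. f i (a i))"
proof (rule prod.mono_neutral_right)
  show "\<forall>i\<in>{1..L'} - {1..L}. f i (a i) = 1"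
  proof
    fix i assume "i \<in> {1..L'} - {1..L}"
    then have "\<not> i \<le> L" by auto
    then have "a i = 0" using assms(1) by blast
    then show "f i (a i) = 1" using assms(3) by simp
  qed
qed (use assms(2) in auto)

lemma num_parts_le: "a \<in> partition_mults k \<Longrightarrow> num_parts k a \<le> k"
  unfolding num_parts_def
  using sum_mono[of "{1..k}" a "\<lambda>i. i * a i"] pm_sum[of a k] by simp

lemma charE_zero: "charE k (\<lambda>_. 0) = (if k = 0 then 1 else 0)"
proof (cases "k = 0")
  case True
  have "partition_mults 0 = {\<lambda>_. 0}"
    by (auto simp: partition_mults_def)
  then show ?thesis using True by (simp add: charE_def num_parts_def)
next
  case False
  have "(\<Prod>i=1..k. of_nat (0 choose a i) :: rat) = 0" if a: "a \<in> partition_mults k" for a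
  proof -
    have "\<exists>i\<in>{1..k}. a i \<noteq> 0"
    proof (rule ccontr)
      assume "\<not> ?thesis"
      then have "(\<Sum>i=1..k. i * a i) = 0" by auto
      with pm_sum[OF a] False show False by simp
    qed
    then obtain i where "i \<in> {1..k}" "a i \<noteq> 0" by blast
    then show ?thesis by (intro prod_zero) auto
  qed
  then have "charE k (\<lambda>_. 0) = (\<Sum>a\<in>partition_mults k. 0)"
    unfolding charE_def by (intro sum.cong) auto
  then show ?thesis using False by simp
qed


lemma upd_sum:
  fixes b :: "nat \<Rightarrow> nat" and f :: "nat \<Rightarrow> nat"
  assumes "m \<in> {1..k}"
  shows "(\<Sum>i=1..k. f i * (b(m := Suc (b m))) i) = (\<Sum>i=1..k. f i * b i) + f m"
proof -
  have "(\<Sum>i=1..k. f i * (b(m := Suc (b m))) i) = (\<Sum>i=1..k. f i * b i + (if i = m then f m else 0))"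
    by (intro sum.cong) auto
  also have "\<dots> = (\<Sum>i=1..k. f i * b i) + f m"
    using assms by (simp add: sum.distrib)
  finally show ?thesis .
qed

lemma gmem:
  assumes b: "b \<in> partition_mults (k - m)" and m: "1 \<le> m" "m \<le> k"
  shows "b(m := Suc (b m)) \<in> partition_mults k"
proof -
  have mk: "m \<in> {1..k}" using m by simp
  have s1: "(\<Sum>i=1..k. i * b i) = (\<Sum>i=1..k-m. i * b i)"
    by (rule sum_supp) (use pm_supp[OF b] in auto)
  have "(\<Sum>i=1..k. i * (b(m := Suc (b m))) i) = k"
    using upd_sum[OF mk, of "\<lambda>i. i" b] s1 pm_sum[OF b] m by simp
  moreover have "1 \<le> i \<and> i \<le> k" if "(b(m := Suc (b m))) i \<noteq> 0" for i
    using that pm_supp[OF b, of i] m by (auto split: if_splits)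
  ultimately show ?thesis unfolding partition_mults_def by blast
qed

lemma hmem:
  assumes a: "a \<in> partition_mults k" and am: "a m \<noteq> 0" and m: "1 \<le> m" "m \<le> k"
  shows "a(m := a m - 1) \<in> partition_mults (k - m)"
proof -
  define b where "b = a(m := a m - 1)"
  have ab: "a = b(m := Suc (b m))" using am by (auto simp: b_def)
  have mk: "m \<in> {1..k}" using m by simp
  have "(\<Sum>i=1..k. i * a i) = (\<Sum>i=1..k. i * b i) + m"
    unfolding ab by (rule upd_sum[OF mk])
  then have sb: "(\<Sum>i=1..k. i * b i) = k - m" using pm_sum[OF a] by simp
  have supp: "1 \<le> i \<and> i \<le> k - m" if "b i \<noteq> 0" for i
  proof -
    have "a i \<noteq> 0" using that by (auto simp: b_def split: if_splits)
    then have i: "i \<in> {1..k}" using pm_supp[OF a] by auto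
    have "i * b i \<le> k - m" using member_le_sum[of i "{1..k}" "\<lambda>i. i * b i"] i sb by simp
    moreover have "1 * i \<le> b i * i" using that by (intro mult_le_mono1) simp
    ultimately have "i \<le> k - m" by (metis le_trans mult_1 mult.commute)
    then show ?thesis using i by simp
  qed
  have "(\<Sum>i=1..k. i * b i) = (\<Sum>i=1..k-m. i * b i)"
    by (rule sum_supp) (use supp in auto)
  then have "(\<Sum>i=1..k-m. i * b i) = k - m" using sb by simp
  then show ?thesis using supp unfolding partition_mults_def b_def[symmetric] by blast
qed


lemma prod_step:
  fixes X a :: "nat \<Rightarrow> nat"
  assumes mk: "m \<in> {1..k}"
  shows "(\<Prod>i=1..k. of_nat ((X(m := Suc (X m))) i choose a i) :: rat)
    = (\<Prod>i=1..k. of_nat (X i choose a i)) +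
      (if a m = 0 then 0 else \<Prod>i=1..k. of_nat (X i choose (a(m := a m - 1)) i))"
proof -
  define R where "R = (\<Prod>i\<in>{1..k}-{m}. of_nat (X i choose a i) :: rat)"
  have e1: "(\<Prod>i=1..k. of_nat ((X(m := Suc (X m))) i choose a i) :: rat)
      = of_nat (Suc (X m) choose a m) * R"
    unfolding R_def by (subst prod.remove[OF _ mk]) (auto intro!: prod.cong)
  have e2: "(\<Prod>i=1..k. of_nat (X i choose a i) :: rat) = of_nat (X m choose a m) * R"
    unfolding R_def by (subst prod.remove[OF _ mk]) (auto intro!: prod.cong)
  have e3: "(\<Prod>i=1..k. of_nat (X i choose (a(m := a m - 1)) i) :: rat)
      = of_nat (X m choose (a m - 1)) * R"
    unfolding R_def by (subst prod.remove[OF _ mk]) (auto intro!: prod.cong)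
  show ?thesis
  proof (cases "a m")
    case 0
    then show ?thesis unfolding e1 e2 by simp
  next
    case (Suc j)
    then show ?thesis unfolding e1 e2 e3 by (simp add: distrib_right)
  qed
qed

lemma charE_step:
  assumes m: "1 \<le> m"
  shows "charE k (X(m := Suc (X m))) = charE k X + (if m \<le> k then (-1)^(m-1) * charE (k-m) X else 0)"
proof (cases "m \<le> k")
  case False
  have "charE k (X(m := Suc (X m))) = charE k X"
    unfolding charE_def using False by (intro sum.cong refl arg_cong2[where f="(*)"] prod.cong) auto
  then show ?thesis using False by simp
next
  case True
  have mk: "m \<in> {1..k}" using m True by simp
  define T where "T a = ((-1::rat)^(k - num_parts k a))" for a
  define h where "h a = a(m := a m - 1)" for a :: "nat \<Rightarrow> nat"
  define g where "g b = b(m := Suc (b m))" for b :: "nat \<Rightarrow> nat"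
  define F where "F a = T a * (\<Prod>i=1..k. of_nat (X i choose (h a) i))" for a
  have "charE k (X(m := Suc (X m))) = (\<Sum>a\<in>partition_mults k. T a * ((\<Prod>i=1..k. of_nat (X i choose a i)) +
      (if a m = 0 then 0 else \<Prod>i=1..k. of_nat (X i choose (h a) i))))"
    unfolding charE_def T_def h_def by (intro sum.cong refl) (subst prod_step[OF mk], rule refl)
  also have "\<dots> = charE k X + (\<Sum>a\<in>partition_mults k. if a m \<noteq> 0 then F a else 0)"
    unfolding charE_def T_def F_def by (simp add: distrib_left sum.distrib if_distrib[of "\<lambda>x. _ * x"] cong: if_cong)
       (intro sum.cong refl, auto)
  also have "(\<Sum>a\<in>partition_mults k. if a m \<noteq> 0 then F a else 0) = (\<Sum>a\<in>{a\<in>partition_mults k. a m \<noteq> 0}. F a)"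
    by (rule sum.inter_filter[symmetric]) (rule finite_pm)
  also have "\<dots> = (\<Sum>b\<in>partition_mults (k-m). F (g b))"
  proof (rule sum.reindex_bij_betw[symmetric])
    show "bij_betw g (partition_mults (k - m)) {a \<in> partition_mults k. a m \<noteq> 0}"
    proof (rule bij_betw_byWitness[where f' = h])
      show "\<forall>a\<in>partition_mults (k - m). h (g a) = a" by (auto simp: g_def h_def)
      show "\<forall>a'\<in>{a \<in> partition_mults k. a m \<noteq> 0}. g (h a') = a'" by (auto simp: g_def h_def)
      show "g ` partition_mults (k - m) \<subseteq> {a \<in> partition_mults k. a m \<noteq> 0}"
        using gmem[OF _ m True] by (auto simp: g_def)
      show "h ` {a \<in> partition_mults k. a m \<noteq> 0} \<subseteq> partition_mults (k - m)"
        using hmem[OF _ _ m True] by (auto simp: h_def)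
    qed
  qed
  also have "\<dots> = (\<Sum>b\<in>partition_mults (k-m). (-1)^(m-1) *
      ((-1)^(k - m - num_parts (k-m) b) * (\<Prod>i=1..k-m. of_nat (X i choose b i))))"
  proof (intro sum.cong refl)
    fix b assume b: "b \<in> partition_mults (k-m)"
    have hg: "h (g b) = b" by (auto simp: g_def h_def)
    have pr: "(\<Prod>i=1..k. of_nat (X i choose b i) :: rat) = (\<Prod>i=1..k-m. of_nat (X i choose b i))"
      by (rule prod_supp) (use pm_supp[OF b] in auto)
    have np1: "num_parts k b = num_parts (k-m) b"
      unfolding num_parts_def by (rule sum_supp[where f="\<lambda>i x. x"]) (use pm_supp[OF b] in auto)
    have "num_parts k (g b) = num_parts k b + 1"
      unfolding num_parts_def g_def using upd_sum[OF mk, of "\<lambda>_. 1" b] by simp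
    then have np: "num_parts k (g b) = num_parts (k-m) b + 1" using np1 by simp
    have le: "num_parts (k-m) b \<le> k - m" by (rule num_parts_le[OF b])
    have "k - num_parts k (g b) = (m - 1) + (k - m - num_parts (k-m) b)"
      using np le m True by simp
    then have "T (g b) = (-1)^(m-1) * (-1)^(k - m - num_parts (k-m) b)"
      unfolding T_def by (simp add: power_add)
    then show "F (g b) = (-1)^(m-1) *
      ((-1)^(k - m - num_parts (k-m) b) * (\<Prod>i=1..k-m. of_nat (X i choose b i)))"
      unfolding F_def hg pr by simp
  qed
  also have "\<dots> = (-1)^(m-1) * charE (k-m) X"
    unfolding charE_def by (simp add: sum_distrib_left)
  finally show ?thesis using True by (simp only: if_True)
qed



definition orb :: "('a \<Rightarrow> 'a) \<Rightarrow> 'a \<Rightarrow> 'a set" where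
  "orb \<sigma> x = {(\<sigma> ^^ k) x | k. True}"

lemma orb_self: "x \<in> orb \<sigma> x"
  unfolding orb_def by (auto intro: exI[of _ 0])

lemma orb_closed:
  assumes "\<And>y. y \<in> B \<Longrightarrow> \<sigma> y \<in> B" "x \<in> B"
  shows "orb \<sigma> x \<subseteq> B"
proof -
  have "(\<sigma> ^^ k) x \<in> B" for k by (induction k) (use assms in auto)
  then show ?thesis unfolding orb_def by auto
qed

lemma orb_back:
  assumes "permutation \<sigma>"
  shows "\<exists>j. (\<sigma> ^^ j) ((\<sigma> ^^ k) x) = x"
proof -
  obtain n where n: "\<sigma> ^^ n = id" "n > k" using permutation_is_nilpotent'[OF assms] by blast
  have "(\<sigma> ^^ (n - k)) ((\<sigma> ^^ k) x) = (\<sigma> ^^ n) x"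
    using n(2) by (metis funpow_add le_add_diff_inverse2 less_imp_le_nat o_apply)
  then show ?thesis using n(1) by auto
qed

lemma orb_eq:
  assumes "permutation \<sigma>" "y \<in> orb \<sigma> x"
  shows "orb \<sigma> y = orb \<sigma> x"
proof -
  obtain k where y: "y = (\<sigma> ^^ k) x" using assms(2) unfolding orb_def by auto
  obtain j where j: "(\<sigma> ^^ j) y = x" using orb_back[OF assms(1)] y by blast
  show ?thesis
  proof
    show "orb \<sigma> y \<subseteq> orb \<sigma> x" unfolding orb_def y
      by (auto simp: funpow_add[symmetric, THEN fun_cong, simplified])
    show "orb \<sigma> x \<subseteq> orb \<sigma> y" unfolding orb_def j[symmetric]
      by (auto simp: funpow_add[symmetric, THEN fun_cong, simplified])
  qed
qed

lemma orb_image: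
  assumes "permutation \<sigma>"
  shows "\<sigma> ` orb \<sigma> x = orb \<sigma> x"
proof
  show "\<sigma> ` orb \<sigma> x \<subseteq> orb \<sigma> x"
    unfolding orb_def by (auto intro: exI[of _ "Suc _"])
  show "orb \<sigma> x \<subseteq> \<sigma> ` orb \<sigma> x"
  proof
    fix y assume "y \<in> orb \<sigma> x"
    then have e: "orb \<sigma> y = orb \<sigma> x" by (rule orb_eq[OF assms])
    have "\<sigma> y \<in> orb \<sigma> y" unfolding orb_def by (auto intro: exI[of _ "Suc 0"])
    then obtain j where j: "(\<sigma> ^^ j) (\<sigma> y) = y" using orb_back[OF assms, of 1 y] by auto
    have "(\<sigma> ^^ j) (\<sigma> y) = \<sigma> ((\<sigma> ^^ j) y)" by (metis comp_apply funpow_swap1)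
    moreover have "(\<sigma> ^^ j) y \<in> orb \<sigma> x" using e unfolding orb_def by auto
    ultimately show "y \<in> \<sigma> ` orb \<sigma> x" using j by (metis image_eqI)
  qed
qed

lemma orb_set_support:
  assumes "permutation \<sigma>"
  shows "set (support \<sigma> s) = orb \<sigma> s"
  unfolding support_set[OF assms] orb_def by auto

lemma sign_cycle_of_list: "distinct cs \<Longrightarrow> sign (cycle_of_list cs) = (-1) ^ (length cs - 1)"
proof (induction cs rule: cycle_of_list.induct)
  case (1 i j cs)
  then have "sign (cycle_of_list (i # j # cs)) = sign (transpose i j) * sign (cycle_of_list (j # cs))"
    by (simp add: sign_compose permutation_swap_id permutation_of_cycle)
  then have eq: "sign (cycle_of_list (i # j # cs)) = - ((-1) ^ length cs)"
    using 1 by (simp add: sign_swap_id)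
  show ?case by (subst eq) simp
qed simp_all

lemma sign_on_orb:
  assumes "permutation \<sigma>"
  shows "sign_on (orb \<sigma> s) \<sigma> = (-1) ^ (card (orb \<sigma> s) - 1)"
proof -
  have "restrict_id \<sigma> (orb \<sigma> s) = cycle_of_list (support \<sigma> s)"
  proof
    fix y show "restrict_id \<sigma> (orb \<sigma> s) y = cycle_of_list (support \<sigma> s) y"
    proof (cases "y \<in> orb \<sigma> s")
      case True
      then show ?thesis using cycle_restrict[OF assms, of y s] orb_set_support[OF assms, of s] by simp
    next
      case False
      then show ?thesis using id_outside_supp[of y "support \<sigma> s"] orb_set_support[OF assms, of s] by simp
    qed
  qed
  moreover have "distinct (support \<sigma> s)" by (rule cycle_of_permutation[OF assms])
  moreover have "length (support \<sigma> s) = card (orb \<sigma> s)"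
    using distinct_card[OF calculation(2)] orb_set_support[OF assms, of s] by simp
  ultimately show ?thesis unfolding sign_on_def by (simp add: sign_cycle_of_list)
qed

lemma sign_on_Un:
  assumes "inj \<sigma>" "\<sigma> ` B = B" "\<sigma> ` C = C" "B \<inter> C = {}" "finite B" "finite C"
  shows "sign_on (B \<union> C) \<sigma> = sign_on B \<sigma> * sign_on C \<sigma>"
proof -
  have "restrict_id \<sigma> (B \<union> C) = restrict_id \<sigma> B \<circ> restrict_id \<sigma> C"
  proof
    fix x show "restrict_id \<sigma> (B \<union> C) x = (restrict_id \<sigma> B \<circ> restrict_id \<sigma> C) x"
    proof (cases "x \<in> C")
      case True
      then have "\<sigma> x \<in> C" using assms(3) by blast
      then have "\<sigma> x \<notin> B" using assms(4) by blast
      then show ?thesis using True by simp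
    next
      case False
      then show ?thesis by (cases "x \<in> B") simp_all
    qed
  qed
  moreover have "permutation (restrict_id \<sigma> B)"
    using permutes_restrict_id[of \<sigma> B] assms by (auto simp: bij_betw_def permutation_permutes inj_on_subset)
  moreover have "permutation (restrict_id \<sigma> C)"
    using permutes_restrict_id[of \<sigma> C] assms by (auto simp: bij_betw_def permutation_permutes inj_on_subset)
  ultimately show ?thesis unfolding sign_on_def by (simp add: sign_compose)
qed



definition ccount :: "('a \<Rightarrow> 'a) \<Rightarrow> 'a set \<Rightarrow> nat \<Rightarrow> nat" where
  "ccount \<sigma> A i = card {C. \<exists>x\<in>A. C = orb \<sigma> x \<and> card C = i}"

definition Inv :: "('a \<Rightarrow> 'a) \<Rightarrow> 'a set \<Rightarrow> 'a set set" where
  "Inv \<sigma> A = {S. S \<subseteq> A \<and> \<sigma> ` S = S}"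

definition sE :: "('a \<Rightarrow> 'a) \<Rightarrow> 'a set \<Rightarrow> nat \<Rightarrow> rat" where
  "sE \<sigma> A k = (\<Sum>S\<in>{S\<in>Inv \<sigma> A. card S = k}. of_int (sign_on S \<sigma>))"

lemma cycle_count_ccount: "cycle_count \<sigma> n = ccount \<sigma> {0..<n}"
  unfolding cycle_count_def ccount_def orb_def by (intro ext arg_cong[where f=card]) auto

lemma finite_Inv: "finite A \<Longrightarrow> finite (Inv \<sigma> A)"
  unfolding Inv_def by (rule finite_subset[of _ "Pow A"]) auto

context
  fixes \<sigma> :: "'a \<Rightarrow> 'a" and A :: "'a set" and s :: 'a
  assumes perm: "\<sigma> permutes A" and fin: "finite A" and sA: "s \<in> A"
begin

definition "C0 = orb \<sigma> s"
definition "q0 = restrict_id \<sigma> (A - C0)"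

lemma pm: "permutation \<sigma>" using perm fin permutation_permutes by blast
lemma injs: "inj \<sigma>" using perm permutes_inj by blast
lemma C0_sub: "C0 \<subseteq> A"
  unfolding C0_def by (rule orb_closed) (use perm sA permutes_in_image[OF perm] in auto)
lemma C0_img: "\<sigma> ` C0 = C0" unfolding C0_def by (rule orb_image[OF pm])
lemma s_C0: "s \<in> C0" unfolding C0_def by (rule orb_self)
lemma fin_C0: "finite C0" using C0_sub fin finite_subset by blast
lemma card_C0: "1 \<le> card C0" using fin_C0 s_C0 by (metis One_nat_def Suc_leI card_gt_0_iff empty_iff)
lemma img_rest: "\<sigma> ` (A - C0) = A - C0"
  using injs C0_img permutes_image[OF perm] by (simp add: image_set_diff)
lemma q0_perm: "q0 permutes (A - C0)"
  unfolding q0_def by (rule permutes_restrict_id) (use img_rest injs in \<open>auto simp: bij_betw_def intro: inj_on_subset[of _ UNIV]\<close>)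
lemma card_less: "card (A - C0) < card A"
  by (intro psubset_card_mono fin) (use s_C0 sA in blast)

lemma q0_eq: "x \<in> A - C0 \<Longrightarrow> q0 x = \<sigma> x" unfolding q0_def by simp

lemma orb_q0: 
  assumes x: "x \<in> A - C0" shows "orb q0 x = orb \<sigma> x"
proof -
  have "(q0 ^^ k) x = (\<sigma> ^^ k) x \<and> (\<sigma> ^^ k) x \<in> A - C0" for k
  proof (induction k)
    case (Suc k)
    then show ?case using q0_eq img_rest by auto
  qed (use x in simp)
  then show ?thesis unfolding orb_def by auto
qed

lemma orb_C0: "x \<in> C0 \<Longrightarrow> orb \<sigma> x = C0"
  unfolding C0_def by (rule orb_eq[OF pm])

lemma ccount_step:
  "ccount \<sigma> A = (ccount q0 (A - C0))(card C0 := Suc (ccount q0 (A - C0) (card C0)))"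
proof
  fix i
  define S' where "S' = {C. \<exists>x\<in>A - C0. C = orb q0 x \<and> card C = i}"
  have finS': "finite S'"
    by (rule finite_subset[of _ "orb q0 ` (A - C0)"]) (use fin in \<open>auto simp: S'_def\<close>)
  have C0S': "C0 \<notin> S'"
  proof
    assume "C0 \<in> S'"
    then obtain x where x: "x \<in> A - C0" "C0 = orb q0 x" unfolding S'_def by auto
    then show False using orb_self[of x q0] by auto
  qed
  have eq: "{C. \<exists>x\<in>A. C = orb \<sigma> x \<and> card C = i} = (if card C0 = i then insert C0 S' else S')"
  proof -
    have "{C. \<exists>x\<in>A. C = orb \<sigma> x \<and> card C = i} = {C. \<exists>x\<in>C0. C = orb \<sigma> x \<and> card C = i} \<union> {C. \<exists>x\<in>A-C0. C = orb \<sigma> x \<and> card C = i}"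
      using C0_sub by blast
    also have "{C. \<exists>x\<in>A-C0. C = orb \<sigma> x \<and> card C = i} = S'"
      unfolding S'_def using orb_q0 by blast
    also have "{C. \<exists>x\<in>C0. C = orb \<sigma> x \<and> card C = i} = (if card C0 = i then {C0} else {})"
      using orb_C0 s_C0 by auto
    finally show ?thesis by auto
  qed
  show "ccount \<sigma> A i = ((ccount q0 (A - C0))(card C0 := Suc (ccount q0 (A - C0) (card C0)))) i"
    unfolding ccount_def eq S'_def[symmetric] using finS' C0S' by (auto simp: S'_def)
qed

lemma q0_img: "T \<subseteq> A - C0 \<Longrightarrow> q0 ` T = \<sigma> ` T"
  by (rule image_cong[OF refl]) (use q0_eq in auto)

lemma Inv_decomp: "Inv \<sigma> A = Inv q0 (A - C0) \<union> (\<lambda>T. T \<union> C0) ` Inv q0 (A - C0)"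
proof
  show "Inv \<sigma> A \<subseteq> Inv q0 (A - C0) \<union> (\<lambda>T. T \<union> C0) ` Inv q0 (A - C0)"
  proof
    fix S assume "S \<in> Inv \<sigma> A"
    then have S: "S \<subseteq> A" "\<sigma> ` S = S" unfolding Inv_def by auto
    show "S \<in> Inv q0 (A - C0) \<union> (\<lambda>T. T \<union> C0) ` Inv q0 (A - C0)"
    proof (cases "S \<inter> C0 = {}")
      case True
      then have "S \<subseteq> A - C0" using S by blast
      then have "S \<in> Inv q0 (A - C0)" using q0_img S unfolding Inv_def by auto
      then show ?thesis by blast
    next
      case False
      then obtain x where x: "x \<in> S" "x \<in> C0" by blast
      have "orb \<sigma> x \<subseteq> S" by (rule orb_closed) (use S x in auto)
      then have CS: "C0 \<subseteq> S" using orb_C0[OF x(2)] by simp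
      define T where "T = S - C0"
      have T: "T \<subseteq> A - C0" using S unfolding T_def by auto
      have "\<sigma> ` T = T" unfolding T_def using S C0_img injs by (simp add: image_set_diff)
      then have "T \<in> Inv q0 (A - C0)" using q0_img[OF T] T unfolding Inv_def by auto
      moreover have "S = T \<union> C0" using CS unfolding T_def by blast
      ultimately show ?thesis by blast
    qed
  qed
next
  show "Inv q0 (A - C0) \<union> (\<lambda>T. T \<union> C0) ` Inv q0 (A - C0) \<subseteq> Inv \<sigma> A"
  proof safe
    fix T assume "T \<in> Inv q0 (A - C0)"
    then have T: "T \<subseteq> A - C0" "q0 ` T = T" unfolding Inv_def by auto
    then have sT: "\<sigma> ` T = T" using q0_img by simp
    show "T \<in> Inv \<sigma> A" using T sT unfolding Inv_def by auto
    show "T \<union> C0 \<in> Inv \<sigma> A" using T sT C0_img C0_sub unfolding Inv_def by (auto simp: image_Un)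
  qed
qed

lemma sign_T: "T \<in> Inv q0 (A - C0) \<Longrightarrow> sign_on T \<sigma> = sign_on T q0"
  unfolding Inv_def using q0_eq by (intro sign_on_cong) auto

lemma sign_TC: 
  assumes "T \<in> Inv q0 (A - C0)"
  shows "sign_on (T \<union> C0) \<sigma> = sign_on T q0 * (-1) ^ (card C0 - 1)"
proof -
  have T: "T \<subseteq> A - C0" "q0 ` T = T" using assms unfolding Inv_def by auto
  then have sT: "\<sigma> ` T = T" using q0_img by simp
  have fT: "finite T" using T(1) fin by (meson Diff_subset finite_subset order_trans)
  have "sign_on (T \<union> C0) \<sigma> = sign_on T \<sigma> * sign_on C0 \<sigma>"
    by (rule sign_on_Un[OF injs sT C0_img]) (use T fT fin_C0 in auto)
  then show ?thesis using sign_T[OF assms] sign_on_orb[OF pm, of s] unfolding C0_def by simp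
qed

lemma sE_step:
  "sE \<sigma> A k = sE q0 (A - C0) k + (if card C0 \<le> k then (-1) ^ (card C0 - 1) * sE q0 (A - C0) (k - card C0) else 0)"
proof -
  define I where "I = Inv q0 (A - C0)"
  define m where "m = card C0"
  have finI: "finite I" unfolding I_def by (rule finite_Inv) (use fin in simp)
  have cardU: "card (T \<union> C0) = card T + m" if "T \<in> I" for T
  proof -
    have "T \<subseteq> A - C0" using that unfolding I_def Inv_def by auto
    moreover have "finite T" using calculation fin by (meson Diff_subset finite_subset order_trans)
    ultimately show ?thesis unfolding m_def
      by (intro card_Un_disjoint fin_C0) auto
  qed
  have sI: "s \<notin> T" if "T \<in> I" for T using that s_C0 unfolding I_def Inv_def by auto
  have set_eq: "{S\<in>Inv \<sigma> A. card S = k} = {T\<in>I. card T = k} \<union> (\<lambda>T. T \<union> C0) ` {T\<in>I. card T + m = k}"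
  proof
    show "{S\<in>Inv \<sigma> A. card S = k} \<subseteq> {T\<in>I. card T = k} \<union> (\<lambda>T. T \<union> C0) ` {T\<in>I. card T + m = k}"
    proof
      fix S assume "S \<in> {S\<in>Inv \<sigma> A. card S = k}"
      then have S: "S \<in> I \<union> (\<lambda>T. T \<union> C0) ` I" "card S = k" unfolding Inv_decomp I_def by auto
      show "S \<in> {T\<in>I. card T = k} \<union> (\<lambda>T. T \<union> C0) ` {T\<in>I. card T + m = k}"
      proof (cases "S \<in> I")
        case True then show ?thesis using S by blast
      next
        case False
        then obtain T where T: "T \<in> I" "S = T \<union> C0" using S by blast
        then have "card T + m = k" using cardU[OF T(1)] S by simp
        then show ?thesis using T by blast
      qed
    qed
    show "{T\<in>I. card T = k} \<union> (\<lambda>T. T \<union> C0) ` {T\<in>I. card T + m = k} \<subseteq> {S\<in>Inv \<sigma> A. card S = k}"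
    proof
      fix S assume "S \<in> {T\<in>I. card T = k} \<union> (\<lambda>T. T \<union> C0) ` {T\<in>I. card T + m = k}"
      then consider "S \<in> I" "card S = k" | T where "T \<in> I" "card T + m = k" "S = T \<union> C0" by blast
      then show "S \<in> {S\<in>Inv \<sigma> A. card S = k}"
      proof cases
        case 1 then show ?thesis unfolding Inv_decomp I_def by blast
      next
        case 2 then show ?thesis using cardU[OF 2(1)] unfolding Inv_decomp I_def by blast
      qed
    qed
  qed
  have disj: "{T\<in>I. card T = k} \<inter> (\<lambda>T. T \<union> C0) ` {T\<in>I. card T + m = k} = {}"
    using sI s_C0 by auto
  have inj: "inj_on (\<lambda>T. T \<union> C0) {T\<in>I. card T + m = k}"
  proof (rule inj_onI)
    fix T T' assume "T \<in> {T\<in>I. card T + m = k}" "T' \<in> {T\<in>I. card T + m = k}" "T \<union> C0 = T' \<union> C0"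
    moreover have "T \<inter> C0 = {}" "T' \<inter> C0 = {}" using calculation unfolding I_def Inv_def by auto
    ultimately show "T = T'" by blast
  qed
  have "sE \<sigma> A k = (\<Sum>S\<in>{T\<in>I. card T = k}. of_int (sign_on S \<sigma>)) +
      (\<Sum>S\<in>(\<lambda>T. T \<union> C0) ` {T\<in>I. card T + m = k}. of_int (sign_on S \<sigma>))"
    unfolding sE_def set_eq by (rule sum.union_disjoint) (use finI disj in auto)
  also have "(\<Sum>S\<in>{T\<in>I. card T = k}. of_int (sign_on S \<sigma>)) = sE q0 (A - C0) k"
    unfolding sE_def I_def by (intro sum.cong refl) (simp add: sign_T)
  also have "(\<Sum>S\<in>(\<lambda>T. T \<union> C0) ` {T\<in>I. card T + m = k}. of_int (sign_on S \<sigma>))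
      = (\<Sum>T\<in>{T\<in>I. card T + m = k}. of_int (sign_on T q0 * (-1) ^ (m - 1)))"
    by (subst sum.reindex[OF inj]) (auto simp: sign_TC I_def m_def simp del: of_int_mult of_int_power intro!: sum.cong)
  also have "\<dots> = (if m \<le> k then (-1) ^ (m - 1) * sE q0 (A - C0) (k - m) else 0)"
  proof (cases "m \<le> k")
    case True
    then have "{T\<in>I. card T + m = k} = {T\<in>I. card T = k - m}" by auto
    then show ?thesis using True unfolding sE_def I_def by (simp add: sum_distrib_left mult.commute)
  next
    case False
    then have "{T\<in>I. card T + m = k} = {}" by auto
    then show ?thesis using False by simp
  qed
  finally show ?thesis unfolding m_def .
qed

end

lemma removal:
  assumes perm: "\<sigma> permutes A" and fin: "finite A" and sA: "s \<in> A"
  shows "\<exists>C q. q permutes (A - C) \<and> card (A - C) < card A \<and> 1 \<le> card C \<and>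
    ccount \<sigma> A = (ccount q (A - C))(card C := Suc (ccount q (A - C) (card C))) \<and>
    (\<forall>k. sE \<sigma> A k = sE q (A - C) k + (if card C \<le> k then (-1) ^ (card C - 1) * sE q (A - C) (k - card C) else 0))"
  apply (intro exI conjI allI)
      apply (rule q0_perm[OF assms])
     apply (rule card_less[OF assms])
    apply (rule card_C0[OF assms])
   apply (rule ccount_step[OF assms])
  apply (rule sE_step[OF assms])
  done

lemma sE_empty: "sE id {} k = (if k = 0 then 1 else 0)"
proof -
  have I: "Inv id {} = {{}}" unfolding Inv_def by blast
  have e: "{S\<in>Inv id {}. card S = k} = (if k = 0 then {{}} else {})" unfolding I by (cases "k = 0") auto
  show ?thesis unfolding sE_def e by simp
qed

lemma ccount_empty: "ccount \<sigma> {} = (\<lambda>_. 0)"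
  unfolding ccount_def by (rule ext) simp


lemma lemmaA_aux:
  "\<forall>A \<sigma>. card A = n \<longrightarrow> finite A \<longrightarrow> \<sigma> permutes A \<longrightarrow> (\<forall>k. charE k (ccount \<sigma> A) = sE \<sigma> A k)"
proof (induction n rule: less_induct)
  case (less n)
  show ?case
  proof (intro allI impI)
    fix A :: "'a set" and \<sigma> k
    assume cA: "card A = n" and fA: "finite A" and pA: "\<sigma> permutes A"
    show "charE k (ccount \<sigma> A) = sE \<sigma> A k"
    proof (cases "A = {}")
      case True
      then have s: "\<sigma> = id" using pA by simp
      show ?thesis unfolding s True ccount_empty charE_zero sE_empty ..
    next
      case False
      then obtain s where sA: "s \<in> A" by blast
      obtain C q where q: "q permutes (A - C)" and lt: "card (A - C) < card A" and c1: "1 \<le> card C"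
        and cc: "ccount \<sigma> A = (ccount q (A - C))(card C := Suc (ccount q (A - C) (card C)))"
        and se: "\<And>k. sE \<sigma> A k = sE q (A - C) k + (if card C \<le> k then (-1) ^ (card C - 1) * sE q (A - C) (k - card C) else 0)"
        using removal[OF pA fA sA] by blast
      have fAC: "finite (A - C)" using fA by simp
      have IH: "charE j (ccount q (A - C)) = sE q (A - C) j" for j
        using less.IH[of "card (A - C)"] lt cA fAC q by blast
      show ?thesis unfolding cc charE_step[OF c1] se IH ..
    qed
  qed
qed

lemma lemmaA:
  assumes "finite A" "\<sigma> permutes A"
  shows "charE k (ccount \<sigma> A) = sE \<sigma> A k"
  using lemmaA_aux assms by blast



lemma sum_union_img:
  assumes "finite I" "inj_on h I" "I \<inter> h ` I = {}"
  shows "(\<Sum>x\<in>I \<union> h ` I. g x) = (\<Sum>x\<in>I. g x + g (h x))"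
proof -
  have "(\<Sum>x\<in>I \<union> h ` I. g x) = (\<Sum>x\<in>I. g x) + (\<Sum>x\<in>h ` I. g x)"
    by (rule sum.union_disjoint) (use assms in auto)
  also have "(\<Sum>x\<in>h ` I. g x) = (\<Sum>x\<in>I. g (h x))"
    by (rule sum.reindex_cong[OF assms(2) refl refl])
  finally show ?thesis by (simp add: sum.distrib)
qed

lemma bsum:
  fixes g :: "bool \<Rightarrow> bool \<Rightarrow> int"
  assumes "finite A" "S \<subseteq> A" "T \<subseteq> A"
  shows "(\<Sum>b\<in>A. g (b\<in>S) (b\<in>T)) =
     (int (card A) - int (card S) - int (card T) + int (card (S \<inter> T))) * g False False
   + (int (card S) - int (card (S \<inter> T))) * g True False
   + (int (card T) - int (card (S \<inter> T))) * g False True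
   + int (card (S \<inter> T)) * g True True"
proof -
  have fS: "finite S" "finite T" using assms finite_subset by auto
  have "(\<Sum>b\<in>A. g (b\<in>S) (b\<in>T)) = (\<Sum>b\<in>A - (S \<union> T). g (b\<in>S) (b\<in>T)) + (\<Sum>b\<in>S \<union> T. g (b\<in>S) (b\<in>T))"
    by (rule sum.subset_diff) (use assms in auto)
  also have "(\<Sum>b\<in>A - (S \<union> T). g (b\<in>S) (b\<in>T)) = (\<Sum>b\<in>A - (S \<union> T). g False False)"
    by (intro sum.cong) auto
  also have "(\<Sum>b\<in>S \<union> T. g (b\<in>S) (b\<in>T)) = (\<Sum>b\<in>S - T. g (b\<in>S) (b\<in>T)) + (\<Sum>b\<in>T. g (b\<in>S) (b\<in>T))"
  proof -
    have "(\<Sum>b\<in>(S - T) \<union> T. g (b\<in>S) (b\<in>T)) = (\<Sum>b\<in>S - T. g (b\<in>S) (b\<in>T)) + (\<Sum>b\<in>T. g (b\<in>S) (b\<in>T))"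
      by (rule sum.union_disjoint) (use fS in auto)
    moreover have "(S - T) \<union> T = S \<union> T" by blast
    ultimately show ?thesis by metis
  qed
  also have "(\<Sum>b\<in>S - T. g (b\<in>S) (b\<in>T)) = (\<Sum>b\<in>S - T. g True False)"
    by (intro sum.cong) auto
  also have "(\<Sum>b\<in>T. g (b\<in>S) (b\<in>T)) = (\<Sum>b\<in>T - S. g (b\<in>S) (b\<in>T)) + (\<Sum>b\<in>S \<inter> T. g (b\<in>S) (b\<in>T))"
  proof -
    have "(\<Sum>b\<in>(T - S) \<union> (S \<inter> T). g (b\<in>S) (b\<in>T)) = (\<Sum>b\<in>T - S. g (b\<in>S) (b\<in>T)) + (\<Sum>b\<in>S \<inter> T. g (b\<in>S) (b\<in>T))"
      by (rule sum.union_disjoint) (use fS in auto)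
    moreover have "(T - S) \<union> (S \<inter> T) = T" by blast
    ultimately show ?thesis by metis
  qed
  also have "(\<Sum>b\<in>T - S. g (b\<in>S) (b\<in>T)) = (\<Sum>b\<in>T - S. g False True)"
    by (intro sum.cong) auto
  also have "(\<Sum>b\<in>S \<inter> T. g (b\<in>S) (b\<in>T)) = (\<Sum>b\<in>S \<inter> T. g True True)"
    by (intro sum.cong) auto
  finally have e: "(\<Sum>b\<in>A. g (b\<in>S) (b\<in>T)) = int (card (A - (S \<union> T))) * g False False
     + (int (card (S - T)) * g True False + (int (card (T - S)) * g False True + int (card (S \<inter> T)) * g True True))"
    by simp
  have c1: "int (card (A - (S \<union> T))) = int (card A) - int (card S) - int (card T) + int (card (S \<inter> T))"
  proof -
    have "card (A - (S \<union> T)) = card A - card (S \<union> T)" by (rule card_Diff_subset) (use fS assms in auto)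
    moreover have "card (S \<union> T) \<le> card A" by (rule card_mono) (use assms in auto)
    moreover have "card S + card T = card (S \<union> T) + card (S \<inter> T)" by (rule card_Un_Int) (use fS in auto)
    ultimately show ?thesis by linarith
  qed
  have c2: "int (card (S - T)) = int (card S) - int (card (S \<inter> T))"
    using card_Diff_subset_Int[of S T] card_mono[of S "S \<inter> T"] fS by auto
  have c3: "int (card (T - S)) = int (card T) - int (card (S \<inter> T))"
    using card_Diff_subset_Int[of T S] card_mono[of T "T \<inter> S"] fS by (auto simp: Int_commute)
  show ?thesis unfolding e c1 c2 c3 by (simp add: algebra_simps)
qed

definition ind :: "int \<Rightarrow> int \<Rightarrow> int \<Rightarrow> int \<Rightarrow> int \<Rightarrow> int \<Rightarrow> int" where
  "ind x y z k l i = (if x = k \<and> y = l \<and> z = i then 1 else 0)"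

lemma psi_id:
  fixes N cS cT cST k l i :: int
  shows "ind cS cT cST k l i + ind (cS+1) cT cST k l i + ind cS (cT+1) cST k l i + ind (cS+1) (cT+1) (cST+1) k l i
   + ((N - cS - cT + cST) * (- ind cS cT cST k l i) + (cS - cST) * ind (cS+1) cT cST k l i
      + (cT - cST) * ind cS (cT+1) cST k l i + cST * (- ind (cS+1) (cT+1) (cST+1) k l i))
   = (1 - (N-k-l+i)) * ind cS cT cST k l i + (k - i) * ind cS cT cST (k-1) l i
     + (l-i) * ind cS cT cST k (l-1) i + (2-i) * ind cS cT cST (k-1) (l-1) (i-1)"
proof -
  have a: "ind (cS+1) cT cST k l i = ind cS cT cST (k-1) l i" unfolding ind_def by auto
  have b: "ind cS (cT+1) cST k l i = ind cS cT cST k (l-1) i" unfolding ind_def by auto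
  have c: "ind (cS+1) (cT+1) (cST+1) k l i = ind cS cT cST (k-1) (l-1) (i-1)" unfolding ind_def by auto
  have d1: "(N - cS - cT + cST) * ind cS cT cST k l i = (N - k - l + i) * ind cS cT cST k l i" unfolding ind_def by auto
  have d2: "(cS - cST) * ind cS cT cST (k-1) l i = (k - 1 - i) * ind cS cT cST (k-1) l i" unfolding ind_def by auto
  have d3: "(cT - cST) * ind cS cT cST k (l-1) i = (l - 1 - i) * ind cS cT cST k (l-1) i" unfolding ind_def by auto
  have d4: "cST * ind cS cT cST (k-1) (l-1) (i-1) = (i - 1) * ind cS cT cST (k-1) (l-1) (i-1)" unfolding ind_def by auto
  show ?thesis unfolding a b c using d1 d2 d3 d4 by (simp add: algebra_simps)
qed

definition PP :: "int \<Rightarrow> int \<Rightarrow> int \<Rightarrow> int \<Rightarrow> bool" where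
  "PP N k l i = (0 \<le> i \<and> i \<le> 1 \<and> i \<le> k \<and> i \<le> l \<and> k + l \<le> N + i \<and> N + i \<le> k + l + 1)"

lemma PP_rec:
  fixes N k l i :: int
  assumes "0 \<le> N"
  shows "(N + 1) * of_bool (PP (N+1) k l i) = (1 - (N-k-l+i)) * of_bool (PP N k l i) + (k - i) * of_bool (PP N (k-1) l i)
     + (l-i) * of_bool (PP N k (l-1) i) + (2-i) * of_bool (PP N (k-1) (l-1) (i-1))"
  using assms unfolding PP_def by (auto simp: of_bool_def algebra_simps)


definition wt :: "('a \<Rightarrow> 'a) \<Rightarrow> 'a set \<Rightarrow> 'a set \<Rightarrow> int" where
  "wt \<sigma> S T = sign \<sigma> * sign_on S \<sigma> * sign_on T \<sigma>"

definition GG :: "('a \<Rightarrow> 'a) \<Rightarrow> 'a set \<Rightarrow> int \<Rightarrow> int \<Rightarrow> int \<Rightarrow> int" where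
  "GG \<sigma> B k l i = (\<Sum>S\<in>Inv \<sigma> B. \<Sum>T\<in>Inv \<sigma> B.
      ind (int (card S)) (int (card T)) (int (card (S \<inter> T))) k l i * wt \<sigma> S T)"

definition FF :: "'a set \<Rightarrow> int \<Rightarrow> int \<Rightarrow> int \<Rightarrow> int" where
  "FF B k l i = (\<Sum>\<sigma>\<in>{\<sigma>. \<sigma> permutes B}. GG \<sigma> B k l i)"

lemma Inv_fin: "finite A \<Longrightarrow> S \<in> Inv \<sigma> A \<Longrightarrow> finite S"
  unfolding Inv_def using finite_subset by auto

lemma GG_fix:
  assumes perm: "\<sigma> permutes A" and fin: "finite A" and aA: "a \<notin> A"
  shows "GG \<sigma> (insert a A) k l i = (\<Sum>S\<in>Inv \<sigma> A. \<Sum>T\<in>Inv \<sigma> A. wt \<sigma> S T *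
     (ind (int (card S)) (int (card T)) (int (card (S \<inter> T))) k l i
    + ind (int (card S) + 1) (int (card T)) (int (card (S \<inter> T))) k l i
    + ind (int (card S)) (int (card T) + 1) (int (card (S \<inter> T))) k l i
    + ind (int (card S) + 1) (int (card T) + 1) (int (card (S \<inter> T)) + 1) k l i))"
proof -
  have sa: "\<sigma> a = a" using perm aA permutes_not_in by metis
  have inj: "inj \<sigma>" using perm permutes_inj by blast
  define I where "I = Inv \<sigma> A"
  have finI: "finite I" unfolding I_def by (rule finite_Inv[OF fin])
  have aI: "a \<notin> S" if "S \<in> I" for S using that aA unfolding I_def Inv_def by auto
  have Ieq: "Inv \<sigma> (insert a A) = I \<union> insert a ` I"
  proof
    show "Inv \<sigma> (insert a A) \<subseteq> I \<union> insert a ` I"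
    proof
      fix S' assume "S' \<in> Inv \<sigma> (insert a A)"
      then have S': "S' \<subseteq> insert a A" "\<sigma> ` S' = S'" unfolding Inv_def by auto
      show "S' \<in> I \<union> insert a ` I"
      proof (cases "a \<in> S'")
        case False
        then have "S' \<in> I" using S' unfolding I_def Inv_def by auto
        then show ?thesis by blast
      next
        case True
        define S where "S = S' - {a}"
        have "\<sigma> ` S = S" unfolding S_def using S'(2) inj sa by (simp add: image_set_diff)
        moreover have "S \<subseteq> A" using S' unfolding S_def by auto
        ultimately have "S \<in> I" unfolding I_def Inv_def by auto
        moreover have "S' = insert a S" using True unfolding S_def by auto
        ultimately show ?thesis by blast
      qed
    qed
    show "I \<union> insert a ` I \<subseteq> Inv \<sigma> (insert a A)"
      unfolding I_def Inv_def using sa by auto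
  qed
  have injI: "inj_on (insert a) I" using aI by (intro inj_onI) (metis insert_ident)
  have disj: "I \<inter> insert a ` I = {}" using aI by auto
  have sgn: "sign_on (insert a S) \<sigma> = sign_on S \<sigma>" for S
  proof -
    have "restrict_id \<sigma> (insert a S) = restrict_id \<sigma> S" using sa by (auto simp: restrict_id_def fun_eq_iff)
    then show ?thesis unfolding sign_on_def by simp
  qed
  have wt1: "wt \<sigma> (insert a S) T = wt \<sigma> S T" "wt \<sigma> S (insert a T) = wt \<sigma> S T"
     "wt \<sigma> (insert a S) (insert a T) = wt \<sigma> S T" for S T
    unfolding wt_def sgn by simp_all
  define F where "F S T = ind (int (card S)) (int (card T)) (int (card (S \<inter> T))) k l i * wt \<sigma> S T" for S T
  have "GG \<sigma> (insert a A) k l i = (\<Sum>S\<in>I \<union> insert a ` I. \<Sum>T\<in>I \<union> insert a ` I. F S T)"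
    unfolding GG_def Ieq F_def ..
  also have "\<dots> = (\<Sum>S\<in>I. \<Sum>T\<in>I. F S T + F S (insert a T) + (F (insert a S) T + F (insert a S) (insert a T)))"
    by (simp only: sum_union_img[OF finI injI disj] sum.distrib)
  also have "\<dots> = (\<Sum>S\<in>I. \<Sum>T\<in>I. wt \<sigma> S T *
     (ind (int (card S)) (int (card T)) (int (card (S \<inter> T))) k l i
    + ind (int (card S) + 1) (int (card T)) (int (card (S \<inter> T))) k l i
    + ind (int (card S)) (int (card T) + 1) (int (card (S \<inter> T))) k l i
    + ind (int (card S) + 1) (int (card T) + 1) (int (card (S \<inter> T)) + 1) k l i))"
  proof (intro sum.cong refl)
    fix S T assume S: "S \<in> I" and T: "T \<in> I"
    have fS: "finite S" "finite T" using S T Inv_fin[OF fin] unfolding I_def by auto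
    have c1: "card (insert a S) = card S + 1" "card (insert a T) = card T + 1"
      using fS aI[OF S] aI[OF T] by simp_all
    have c2: "insert a S \<inter> T = S \<inter> T" "S \<inter> insert a T = S \<inter> T" "insert a S \<inter> insert a T = insert a (S \<inter> T)"
      using aI[OF S] aI[OF T] by auto
    have c3: "card (insert a (S \<inter> T)) = card (S \<inter> T) + 1" using fS aI[OF S] by simp
    show "F S T + F S (insert a T) + (F (insert a S) T + F (insert a S) (insert a T)) = wt \<sigma> S T *
     (ind (int (card S)) (int (card T)) (int (card (S \<inter> T))) k l i
    + ind (int (card S) + 1) (int (card T)) (int (card (S \<inter> T))) k l i
    + ind (int (card S)) (int (card T) + 1) (int (card (S \<inter> T))) k l i
    + ind (int (card S) + 1) (int (card T) + 1) (int (card (S \<inter> T)) + 1) k l i)"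
      unfolding F_def wt1 c1 c2 c3 by (simp add: algebra_simps)
  qed
  finally show ?thesis unfolding I_def .
qed


definition gf :: "int \<Rightarrow> int \<Rightarrow> int \<Rightarrow> 'a set \<Rightarrow> 'a set \<Rightarrow> bool \<Rightarrow> bool \<Rightarrow> int" where
  "gf k l i S T p q = - ((if p then -1 else 1) * (if q then -1 else 1) *
     ind (int (card S) + of_bool p) (int (card T) + of_bool q) (int (card (S \<inter> T)) + of_bool (p \<and> q)) k l i)"

lemma sign_on_insert_fix: "\<sigma> a = a \<Longrightarrow> sign_on (insert a S) \<sigma> = sign_on S \<sigma>"
proof -
  assume sa: "\<sigma> a = a"
  have "restrict_id \<sigma> (insert a S) = restrict_id \<sigma> S" using sa by (auto simp: restrict_id_def fun_eq_iff)
  then show ?thesis unfolding sign_on_def by simp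
qed

lemma GG_swap:
  assumes perm: "\<sigma> permutes A" and fin: "finite A" and aA: "a \<notin> A" and bA: "b \<in> A"
  shows "GG (Transposition.transpose a b \<circ> \<sigma>) (insert a A) k l i
    = (\<Sum>S\<in>Inv \<sigma> A. \<Sum>T\<in>Inv \<sigma> A. wt \<sigma> S T * gf k l i S T (b \<in> S) (b \<in> T))"
proof -
  define \<tau> where "\<tau> = Transposition.transpose a b"
  define \<sigma>' where "\<sigma>' = \<tau> \<circ> \<sigma>"
  have sa: "\<sigma> a = a" using perm aA permutes_not_in by metis
  have ab: "a \<noteq> b" using aA bA by auto
  have inj: "inj \<sigma>" using perm permutes_inj by blast
  have tt: "\<tau> \<circ> \<tau> = id" unfolding \<tau>_def by simp
  have ss: "\<sigma> = \<tau> \<circ> \<sigma>'" unfolding \<sigma>'_def by (metis comp_assoc tt id_comp)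
  define I where "I = Inv \<sigma> A"
  have finI: "finite I" unfolding I_def by (rule finite_Inv[OF fin])
  have aI: "a \<notin> S" "S \<subseteq> A" "\<sigma> ` S = S" if "S \<in> I" for S using that aA unfolding I_def Inv_def by auto
  define ext where "ext S = (if b \<in> S then insert a S else S)" for S
  have Ieq: "Inv \<sigma>' (insert a A) = ext ` I"
  proof
    show "Inv \<sigma>' (insert a A) \<subseteq> ext ` I"
    proof
      fix S' assume "S' \<in> Inv \<sigma>' (insert a A)"
      then have S': "S' \<subseteq> insert a A" "\<sigma>' ` S' = S'" unfolding Inv_def by auto
      have sS': "\<sigma> ` S' = \<tau> ` S'" unfolding ss image_comp[symmetric] S'(2) ..
      show "S' \<in> ext ` I"
      proof (cases "a \<in> S'")
        case True
        have "\<sigma>' a = b" unfolding \<sigma>'_def \<tau>_def by (simp add: sa)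
        then have bS': "b \<in> S'" using S'(2) True by blast
        then have sS'': "\<sigma> ` S' = S'" unfolding sS' \<tau>_def using True by simp
        define S where "S = S' - {a}"
        have "\<sigma> ` S = S" unfolding S_def using sS'' inj sa by (simp add: image_set_diff)
        moreover have "S \<subseteq> A" using S' unfolding S_def by auto
        ultimately have SI: "S \<in> I" unfolding I_def Inv_def by auto
        have "b \<in> S" using bS' ab unfolding S_def by auto
        then have "ext S = S'" unfolding ext_def S_def using True by auto
        then show ?thesis using SI by blast
      next
        case False
        have bS': "b \<notin> S'"
        proof
          assume "b \<in> S'"
          then obtain x where x: "x \<in> S'" "\<sigma>' x = b" using S'(2) by (metis imageE)
          then have "\<sigma> x = a" unfolding \<sigma>'_def \<tau>_def using ab
            by (auto simp: transpose_eq_iff)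
          then have "x = a" using sa inj by (metis injD)
          then show False using x False by simp
        qed
        then have sS'': "\<sigma> ` S' = S'" unfolding sS' \<tau>_def using False by simp
        have "S' \<subseteq> A" using S' False by auto
        then have SI: "S' \<in> I" using sS'' unfolding I_def Inv_def by auto
        have "ext S' = S'" unfolding ext_def using bS' by simp
        then show ?thesis using SI by (metis imageI)
      qed
    qed
    show "ext ` I \<subseteq> Inv \<sigma>' (insert a A)"
    proof
      fix S' assume "S' \<in> ext ` I"
      then obtain S where S: "S \<in> I" "S' = ext S" by blast
      show "S' \<in> Inv \<sigma>' (insert a A)"
      proof (cases "b \<in> S")
        case True
        have "\<sigma>' ` insert a S = \<tau> ` (\<sigma> ` insert a S)" unfolding \<sigma>'_def by (simp add: image_comp)
        also have "\<sigma> ` insert a S = insert a S" using aI(3)[OF S(1)] sa by simp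
        also have "\<tau> ` insert a S = insert a S" unfolding \<tau>_def by (rule transpose_image_eq) (use True in simp)
        finally show ?thesis using S True aI(2)[OF S(1)] unfolding ext_def Inv_def by auto
      next
        case False
        have "\<sigma>' ` S = \<tau> ` (\<sigma> ` S)" unfolding \<sigma>'_def by (simp add: image_comp)
        also have "\<sigma> ` S = S" using aI(3)[OF S(1)] by simp
        also have "\<tau> ` S = S" unfolding \<tau>_def using False aI(1)[OF S(1)] by simp
        finally show ?thesis using S False aI(2)[OF S(1)] unfolding ext_def Inv_def by auto
      qed
    qed
  qed
  have injI: "inj_on ext I"
  proof (rule inj_on_inverseI[where g = "\<lambda>S. S - {a}"])
    fix S assume "S \<in> I" then show "ext S - {a} = S" using aI(1)[of S] unfolding ext_def by auto
  qed
  have sgn: "sign \<sigma>' = - sign \<sigma>"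
  proof -
    have "permutation \<sigma>" using perm fin permutation_permutes by blast
    then show ?thesis unfolding \<sigma>'_def \<tau>_def
      by (simp add: sign_compose permutation_swap_id sign_swap_id ab)
  qed
  have sgnS: "sign_on (ext S) \<sigma>' = (if b \<in> S then -1 else 1) * sign_on S \<sigma>" if S: "S \<in> I" for S
  proof (cases "b \<in> S")
    case True
    have fS: "finite (insert a S)" using aI(2)[OF S] fin finite_subset by auto
    have r: "restrict_id \<sigma>' (insert a S) = \<tau> \<circ> restrict_id \<sigma> (insert a S)"
    proof
      fix x show "restrict_id \<sigma>' (insert a S) x = (\<tau> \<circ> restrict_id \<sigma> (insert a S)) x"
      proof (cases "x \<in> insert a S")
        case True then show ?thesis unfolding \<sigma>'_def by simp
      next
        case False
        then have "x \<noteq> a" "x \<noteq> b" using \<open>b \<in> S\<close> by auto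
        then show ?thesis using False unfolding \<tau>_def by simp
      qed
    qed
    have i1: "inj_on \<sigma> (insert a S)" by (rule inj_on_subset[OF inj subset_UNIV])
    have i2: "\<sigma> ` insert a S = insert a S" using aI(3)[OF S] sa by simp
    have "bij_betw \<sigma> (insert a S) (insert a S)"
      unfolding bij_betw_def using i1 i2 by blast
    then have "restrict_id \<sigma> (insert a S) permutes (insert a S)" by (rule permutes_restrict_id)
    then have pr: "permutation (restrict_id \<sigma> (insert a S))" using fS permutation_permutes by blast
    have "sign_on (insert a S) \<sigma>' = sign \<tau> * sign_on (insert a S) \<sigma>"
      unfolding sign_on_def r by (simp add: sign_compose pr \<tau>_def permutation_swap_id)
    also have "\<dots> = - sign_on S \<sigma>" unfolding \<tau>_def sign_on_insert_fix[of \<sigma> a, OF sa]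
      by (simp add: sign_swap_id ab)
    finally show ?thesis using True unfolding ext_def by simp
  next
    case False
    have "sign_on S \<sigma>' = sign_on S \<sigma>"
    proof (rule sign_on_cong)
      fix x assume "x \<in> S"
      then have "\<sigma> x \<in> S" using aI(3)[OF S] by blast
      then have "\<sigma> x \<noteq> a" "\<sigma> x \<noteq> b" using aI(1)[OF S] False by auto
      then show "\<sigma>' x = \<sigma> x" unfolding \<sigma>'_def \<tau>_def by simp
    qed simp
    then show ?thesis using False unfolding ext_def by simp
  qed
  have cardS: "int (card (ext S)) = int (card S) + of_bool (b \<in> S)" if S: "S \<in> I" for S
  proof -
    have "finite S" using aI(2)[OF S] fin finite_subset by auto
    then show ?thesis using aI(1)[OF S] unfolding ext_def by auto
  qed
  have cardST: "int (card (ext S \<inter> ext T)) = int (card (S \<inter> T)) + of_bool (b \<in> S \<and> b \<in> T)"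
    if S: "S \<in> I" and T: "T \<in> I" for S T
  proof -
    have f: "finite (S \<inter> T)" using aI(2)[OF S] fin finite_subset by auto
    have "ext S \<inter> ext T = (if b \<in> S \<and> b \<in> T then insert a (S \<inter> T) else S \<inter> T)"
      unfolding ext_def using aI(1)[OF S] aI(1)[OF T] by auto
    then show ?thesis using f aI(1)[OF S] by auto
  qed
  have "GG \<sigma>' (insert a A) k l i = (\<Sum>S\<in>ext ` I. \<Sum>T\<in>ext ` I.
      ind (int (card S)) (int (card T)) (int (card (S \<inter> T))) k l i * wt \<sigma>' S T)"
    unfolding GG_def Ieq ..
  also have "\<dots> = (\<Sum>S\<in>I. \<Sum>T\<in>I.
      ind (int (card (ext S))) (int (card (ext T))) (int (card (ext S \<inter> ext T))) k l i * wt \<sigma>' (ext S) (ext T))"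
    by (simp add: sum.reindex[OF injI])
  also have "\<dots> = (\<Sum>S\<in>I. \<Sum>T\<in>I. wt \<sigma> S T * gf k l i S T (b \<in> S) (b \<in> T))"
  proof (intro sum.cong refl)
    fix S T assume S: "S \<in> I" and T: "T \<in> I"
    show "ind (int (card (ext S))) (int (card (ext T))) (int (card (ext S \<inter> ext T))) k l i * wt \<sigma>' (ext S) (ext T)
      = wt \<sigma> S T * gf k l i S T (b \<in> S) (b \<in> T)"
      unfolding cardS[OF S] cardS[OF T] cardST[OF S T] wt_def sgn sgnS[OF S] sgnS[OF T] gf_def
      by (simp add: algebra_simps)
  qed
  finally show ?thesis unfolding \<sigma>'_def \<tau>_def I_def .
qed


lemma gf_vals:
  "gf k l i S T False False = - ind (int (card S)) (int (card T)) (int (card (S \<inter> T))) k l i"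
  "gf k l i S T True False = ind (int (card S) + 1) (int (card T)) (int (card (S \<inter> T))) k l i"
  "gf k l i S T False True = ind (int (card S)) (int (card T) + 1) (int (card (S \<inter> T))) k l i"
  "gf k l i S T True True = - ind (int (card S) + 1) (int (card T) + 1) (int (card (S \<inter> T)) + 1) k l i"
  by (simp_all add: gf_def)

lemma FF_rec:
  assumes fin: "finite A" and aA: "a \<notin> A"
  shows "FF (insert a A) k l i = (1 - (int (card A) - k - l + i)) * FF A k l i + (k - i) * FF A (k-1) l i
     + (l - i) * FF A k (l-1) i + (2 - i) * FF A (k-1) (l-1) (i-1)"
proof -
  define N where "N = int (card A)"
  define P where "P = {\<sigma>. \<sigma> permutes A}"
  define Psi where "Psi S T = (1 - (N - k - l + i)) * ind (int (card S)) (int (card T)) (int (card (S \<inter> T))) k l i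
     + (k - i) * ind (int (card S)) (int (card T)) (int (card (S \<inter> T))) (k-1) l i
     + (l - i) * ind (int (card S)) (int (card T)) (int (card (S \<inter> T))) k (l-1) i
     + (2 - i) * ind (int (card S)) (int (card T)) (int (card (S \<inter> T))) (k-1) (l-1) (i-1)" for S T :: "'a set"
  have "FF (insert a A) k l i = (\<Sum>b\<in>insert a A. \<Sum>\<sigma>\<in>P. GG (Transposition.transpose a b \<circ> \<sigma>) (insert a A) k l i)"
    unfolding FF_def P_def by (rule sum_over_permutations_insert[OF fin aA])
  also have "\<dots> = (\<Sum>\<sigma>\<in>P. \<Sum>b\<in>insert a A. GG (Transposition.transpose a b \<circ> \<sigma>) (insert a A) k l i)"
    by (rule sum.swap)
  also have "\<dots> = (\<Sum>\<sigma>\<in>P. \<Sum>S\<in>Inv \<sigma> A. \<Sum>T\<in>Inv \<sigma> A. wt \<sigma> S T * Psi S T)"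
  proof (rule sum.cong[OF refl])
    fix \<sigma> assume "\<sigma> \<in> P"
    then have perm: "\<sigma> permutes A" unfolding P_def by simp
    define I where "I = Inv \<sigma> A"
    have sub: "S \<subseteq> A" if "S \<in> I" for S using that unfolding I_def Inv_def by auto
    have "(\<Sum>b\<in>insert a A. GG (Transposition.transpose a b \<circ> \<sigma>) (insert a A) k l i)
        = GG \<sigma> (insert a A) k l i + (\<Sum>b\<in>A. GG (Transposition.transpose a b \<circ> \<sigma>) (insert a A) k l i)"
      using fin aA by (simp add: sum.insert)
    also have "(\<Sum>b\<in>A. GG (Transposition.transpose a b \<circ> \<sigma>) (insert a A) k l i)
        = (\<Sum>b\<in>A. \<Sum>S\<in>I. \<Sum>T\<in>I. wt \<sigma> S T * gf k l i S T (b \<in> S) (b \<in> T))"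
      unfolding I_def by (intro sum.cong refl GG_swap[OF perm fin aA])
    also have "\<dots> = (\<Sum>S\<in>I. \<Sum>T\<in>I. \<Sum>b\<in>A. wt \<sigma> S T * gf k l i S T (b \<in> S) (b \<in> T))"
      by (subst sum.swap) (subst (2) sum.swap, rule refl)
    also have "\<dots> = (\<Sum>S\<in>I. \<Sum>T\<in>I. wt \<sigma> S T * (\<Sum>b\<in>A. gf k l i S T (b \<in> S) (b \<in> T)))"
      by (simp add: sum_distrib_left)
    also have "GG \<sigma> (insert a A) k l i = (\<Sum>S\<in>I. \<Sum>T\<in>I. wt \<sigma> S T *
     (ind (int (card S)) (int (card T)) (int (card (S \<inter> T))) k l i
    + ind (int (card S) + 1) (int (card T)) (int (card (S \<inter> T))) k l i
    + ind (int (card S)) (int (card T) + 1) (int (card (S \<inter> T))) k l i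
    + ind (int (card S) + 1) (int (card T) + 1) (int (card (S \<inter> T)) + 1) k l i))"
      unfolding I_def by (rule GG_fix[OF perm fin aA])
    finally have e0: "(\<Sum>b\<in>insert a A. GG (Transposition.transpose a b \<circ> \<sigma>) (insert a A) k l i) =
      (\<Sum>S\<in>I. \<Sum>T\<in>I. wt \<sigma> S T *
     (ind (int (card S)) (int (card T)) (int (card (S \<inter> T))) k l i
    + ind (int (card S) + 1) (int (card T)) (int (card (S \<inter> T))) k l i
    + ind (int (card S)) (int (card T) + 1) (int (card (S \<inter> T))) k l i
    + ind (int (card S) + 1) (int (card T) + 1) (int (card (S \<inter> T)) + 1) k l i))
    + (\<Sum>S\<in>I. \<Sum>T\<in>I. wt \<sigma> S T * (\<Sum>b\<in>A. gf k l i S T (b \<in> S) (b \<in> T)))" .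
    have e: "(\<Sum>b\<in>insert a A. GG (Transposition.transpose a b \<circ> \<sigma>) (insert a A) k l i) =
      (\<Sum>S\<in>I. \<Sum>T\<in>I. wt \<sigma> S T *
     (ind (int (card S)) (int (card T)) (int (card (S \<inter> T))) k l i
    + ind (int (card S) + 1) (int (card T)) (int (card (S \<inter> T))) k l i
    + ind (int (card S)) (int (card T) + 1) (int (card (S \<inter> T))) k l i
    + ind (int (card S) + 1) (int (card T) + 1) (int (card (S \<inter> T)) + 1) k l i
    + (\<Sum>b\<in>A. gf k l i S T (b \<in> S) (b \<in> T))))"
      unfolding e0 by (simp only: distrib_left sum.distrib)
    show "(\<Sum>b\<in>insert a A. GG (Transposition.transpose a b \<circ> \<sigma>) (insert a A) k l i) =
      (\<Sum>S\<in>Inv \<sigma> A. \<Sum>T\<in>Inv \<sigma> A. wt \<sigma> S T * Psi S T)"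
      unfolding e I_def[symmetric]
    proof (intro sum.cong refl arg_cong2[where f="(*)"])
      fix S T assume S: "S \<in> I" and T: "T \<in> I"
      show "ind (int (card S)) (int (card T)) (int (card (S \<inter> T))) k l i
    + ind (int (card S) + 1) (int (card T)) (int (card (S \<inter> T))) k l i
    + ind (int (card S)) (int (card T) + 1) (int (card (S \<inter> T))) k l i
    + ind (int (card S) + 1) (int (card T) + 1) (int (card (S \<inter> T)) + 1) k l i
    + (\<Sum>b\<in>A. gf k l i S T (b \<in> S) (b \<in> T)) = Psi S T"
        unfolding bsum[OF fin sub[OF S] sub[OF T]] gf_vals Psi_def N_def[symmetric]
        by (rule psi_id)
    qed
  qed
  also have "\<dots> = (\<Sum>\<sigma>\<in>P. \<Sum>S\<in>Inv \<sigma> A. \<Sum>T\<in>Inv \<sigma> A.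
       (1 - (N - k - l + i)) * (ind (int (card S)) (int (card T)) (int (card (S \<inter> T))) k l i * wt \<sigma> S T)
     + (k - i) * (ind (int (card S)) (int (card T)) (int (card (S \<inter> T))) (k-1) l i * wt \<sigma> S T)
     + (l - i) * (ind (int (card S)) (int (card T)) (int (card (S \<inter> T))) k (l-1) i * wt \<sigma> S T)
     + (2 - i) * (ind (int (card S)) (int (card T)) (int (card (S \<inter> T))) (k-1) (l-1) (i-1) * wt \<sigma> S T))"
    by (intro sum.cong refl) (simp add: Psi_def algebra_simps)
  also have "\<dots> = (1 - (N - k - l + i)) * FF A k l i + (k - i) * FF A (k-1) l i
     + (l - i) * FF A k (l-1) i + (2 - i) * FF A (k-1) (l-1) (i-1)"
    unfolding FF_def GG_def P_def[symmetric]
    by (simp only: sum_distrib_left sum.distrib)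
  finally show ?thesis unfolding N_def .
qed




definition cc :: "nat \<Rightarrow> nat \<Rightarrow> nat \<Rightarrow> rat" where
  "cc n l k = of_bool (k+l=n) + of_bool (k+l+1=n) + of_bool (1\<le>k \<and> 1\<le>l \<and> k+l=n+1)
     + of_bool (1\<le>k \<and> 1\<le>l \<and> k+l=n)"

lemma geom_inv:
  fixes c :: "'a::comm_ring_1"
  shows "(1 - fps_const c * fps_X) * Abs_fps (\<lambda>n. c^n) = 1"
proof (rule fps_ext)
  fix n
  have "((1 - fps_const c * fps_X) * Abs_fps (\<lambda>n. c^n)) $ n
      = Abs_fps (\<lambda>n. c^n) $ n - c * (fps_X * Abs_fps (\<lambda>n. c^n)) $ n"
    by (simp only: left_diff_distrib mult_1_left mult.assoc fps_sub_nth fps_mult_left_const_nth)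
  also have "\<dots> = 1 $ n" by (cases n) simp_all
  finally show "((1 - fps_const c * fps_X) * Abs_fps (\<lambda>n. c^n)) $ n = 1 $ n" .
qed

lemma inv_D:
  fixes D :: "rat fps fps fps"
  assumes "D $ 0 = 1"
  shows "D * inverse D = 1"
proof -
  have i1: "inverse (1::rat fps fps) = 1"
    by (rule fps_inverse_one') simp
  have "inverse D = fps_right_inverse D (inverse (D$0))"
    by (simp add: fps_inverse_def)
  moreover have "D * fps_right_inverse D (inverse (D$0)) = 1"
    by (rule fps_right_inverse) (simp add: assms i1)
  ultimately show ?thesis by simp
qed

lemma GG_nth:
  "(Abs_fps (\<lambda>n. (fps_const fps_X :: rat fps fps)^n) * Abs_fps (\<lambda>n. fps_X^n)) $ m
     = Abs_fps (\<lambda>l. Abs_fps (\<lambda>k. of_bool (k+l=m)))"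
proof (rule fps_ext, rule fps_ext)
  fix l k
  have "((Abs_fps (\<lambda>n. (fps_const fps_X :: rat fps fps)^n) * Abs_fps (\<lambda>n. fps_X^n)) $ m) $ l $ k
     = (\<Sum>i=0..m. if l = m - i \<and> k = i then 1 else 0)"
    apply (subst fps_mult_nth)
    apply (simp only: fps_sum_nth)
    apply (intro sum.cong refl)
    apply simp
    done
  also have "\<dots> = of_bool (k+l=m)"
  proof (cases "k + l = m")
    case True
    then have "(\<Sum>i=0..m. if l = m - i \<and> k = i then 1 else 0) = (\<Sum>i\<in>{k}. (1::rat))"
      by (intro sum.mono_neutral_cong_right) auto
    then show ?thesis using True by simp
  next
    case False
    then have "(\<Sum>i=0..m. if l = m - i \<and> k = i then 1 else 0) = (0::rat)"
      by (intro sum.neutral) auto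
    then show ?thesis using False by simp
  qed
  finally show "((Abs_fps (\<lambda>n. (fps_const fps_X :: rat fps fps)^n) * Abs_fps (\<lambda>n. fps_X^n)) $ m) $ l $ k
     = Abs_fps (\<lambda>l. Abs_fps (\<lambda>k. of_bool (k+l=m))) $ l $ k" by simp
qed

lemma coeff_aux: fixes G :: "rat fps fps fps" and UV :: "rat fps fps" and HH :: "nat \<Rightarrow> rat fps fps"
  and n l k :: nat
assumes HHn: "\<And>m l k. HH m $ l $ k = of_bool (k+l=m)"
 and G0: "G $ n = HH n" and h1: "(fps_X * G) $ n = (if n = 0 then 0 else HH (n-1))"
 and h2: "(fps_X^2 * G) $ n = (if n < 2 then 0 else HH (n-2))"
 and UVg: "\<And>g l k. (UV * g) $ l $ k = (if l = 0 then 0 else if k = 0 then 0 else g $ (l-1) $ (k-1))"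
shows "(G + fps_X * G + fps_const UV * (fps_X * G) + fps_const UV * (fps_X^2 * G)) $ n $ l $ k
      = of_bool (k+l=n) + (if n = 0 then 0 else of_bool (k+l=n-1))
        + (if n = 0 then 0 else (if l = 0 then 0 else if k = 0 then 0 else of_bool ((k-1)+(l-1)=n-1)))
        + (if n < 2 then 0 else (if l = 0 then 0 else if k = 0 then 0 else of_bool ((k-1)+(l-1)=n-2)))"
  unfolding fps_add_nth fps_mult_left_const_nth h1 h2 G0 UVg HHn
  by (cases "n = 0"; cases "n < 2") (simp_all add: HHn)

lemma cc_aux: fixes n l k :: nat shows "of_bool (k+l=n) + (if n = 0 then 0 else of_bool (k+l=n-1))
        + (if n = 0 then 0 else (if l = 0 then 0 else if k = 0 then 0 else of_bool ((k-1)+(l-1)=n-1)))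
        + (if n < 2 then 0 else (if l = 0 then 0 else if k = 0 then 0 else of_bool ((k-1)+(l-1)=n-2)))
   = (of_bool (k+l=n) + of_bool (k+l+1=n) + of_bool (1\<le>k \<and> 1\<le>l \<and> k+l=n+1)
     + of_bool (1\<le>k \<and> 1\<le>l \<and> k+l=n) :: rat)"
proof -
  have a: "(if n = 0 then 0 else of_bool (k+l=n-1)) = (of_bool (k+l+1=n) :: rat)" by auto
  have b: "(if n = 0 then 0 else (if l = 0 then 0 else if k = 0 then 0 else of_bool ((k-1)+(l-1)=n-1)))
      = (of_bool (1\<le>k \<and> 1\<le>l \<and> k+l=n+1) :: rat)" by auto
  have c: "(if n < 2 then 0 else (if l = 0 then 0 else if k = 0 then 0 else of_bool ((k-1)+(l-1)=n-2)))
      = (of_bool (1\<le>k \<and> 1\<le>l \<and> k+l=n) :: rat)" by auto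
  show ?thesis unfolding a b c ..
qed

lemma fps_part:
  "Abs_fps (\<lambda>n. Abs_fps (\<lambda>l. Abs_fps (\<lambda>k. cc n l k)))
   = (1 + fz) * (1 + fu * fv * fz) * inverse ((1 - fu * fz) * (1 - fv * fz))"
proof -
  define Gu :: "rat fps fps fps" where "Gu = Abs_fps (\<lambda>n. (fps_const fps_X)^n)"
  define Gv :: "rat fps fps fps" where "Gv = Abs_fps (\<lambda>n. fps_X^n)"
  define D where "D = (1 - fu * fz) * (1 - fv * fz)"
  have gu: "(1 - fu * fz) * Gu = 1" unfolding Gu_def fu_def fz_def by (rule geom_inv)
  have gv: "(1 - fv * fz) * Gv = 1" unfolding Gv_def fv_def fz_def by (rule geom_inv)
  have DG: "D * (Gu * Gv) = 1"
    by (metis (no_types, lifting) D_def gu gv mult.assoc mult.left_commute mult_1_right)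
  have D0: "D $ 0 = 1" by (simp add: D_def fu_def fv_def fz_def)
  have "inverse D = (D * (Gu * Gv)) * inverse D" using DG by simp
  also have "\<dots> = (Gu * Gv) * (D * inverse D)" by (simp add: ac_simps)
  also have "\<dots> = Gu * Gv" using inv_D[OF D0] by simp
  finally have invD: "inverse D = Gu * Gv" .
  have GG: "(Gu * Gv) $ m = Abs_fps (\<lambda>l. Abs_fps (\<lambda>k. of_bool (k+l=m)))" for m
    unfolding Gu_def Gv_def by (rule GG_nth)
  define UV :: "rat fps fps" where "UV = fps_const fps_X * fps_X"
  have UVg: "(UV * g) $ l $ k = (if l = 0 then 0 else if k = 0 then 0 else g $ (l-1) $ (k-1))" for g l k
    unfolding UV_def by (simp add: mult.assoc del: fps_mult_left_const_nth) (simp add: mult.assoc)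
  have N: "(1 + fz) * (1 + fu * fv * fz) = 1 + fps_X + fps_const UV * fps_X + fps_const UV * fps_X^2"
    by (simp add: fu_def fv_def fz_def UV_def algebra_simps power2_eq_square)
  have "(1 + fz) * (1 + fu * fv * fz) * inverse D
       = (Gu*Gv) + fps_X * (Gu*Gv) + fps_const UV * (fps_X * (Gu*Gv)) + fps_const UV * (fps_X^2 * (Gu * Gv))"
    unfolding N invD by (simp only: distrib_right mult_1_left mult.assoc)
  also have "\<dots> = Abs_fps (\<lambda>n. Abs_fps (\<lambda>l. Abs_fps (\<lambda>k. cc n l k)))"
  proof (rule fps_ext, rule fps_ext, rule fps_ext)
    fix n l k
    define HH :: "nat \<Rightarrow> rat fps fps" where "HH m = Abs_fps (\<lambda>l. Abs_fps (\<lambda>k. of_bool (k+l=m)))" for m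
    have HHn: "HH m $ l $ k = of_bool (k+l=m)" for m l k by (simp add: HH_def)
    have G0: "(Gu*Gv) $ n = HH n" by (simp add: GG HH_def)
    have h1: "(fps_X * (Gu*Gv)) $ n = (if n = 0 then 0 else HH (n-1))"
      by (simp add: GG HH_def)
    have h2: "(fps_X^2 * (Gu*Gv)) $ n = (if n < 2 then 0 else HH (n-2))"
      by (simp add: GG HH_def fps_X_power_mult_nth)
    have "((Gu*Gv) + fps_X * (Gu*Gv) + fps_const UV * (fps_X * (Gu*Gv)) + fps_const UV * (fps_X^2 * (Gu * Gv))) $ n $ l $ k
      = of_bool (k+l=n) + (if n = 0 then 0 else of_bool (k+l=n-1))
        + (if n = 0 then 0 else (if l = 0 then 0 else if k = 0 then 0 else of_bool ((k-1)+(l-1)=n-1)))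
        + (if n < 2 then 0 else (if l = 0 then 0 else if k = 0 then 0 else of_bool ((k-1)+(l-1)=n-2)))"
      by (rule coeff_aux[OF HHn G0 h1 h2 UVg])
    also have "\<dots> = cc n l k" unfolding cc_def by (rule cc_aux)
    also have "cc n l k = Abs_fps (\<lambda>n. Abs_fps (\<lambda>l. Abs_fps (\<lambda>k. cc n l k))) $ n $ l $ k" by simp
    finally show "((Gu*Gv) + fps_X * (Gu*Gv) + fps_const UV * (fps_X * (Gu*Gv)) + fps_const UV * (fps_X^2 * (Gu * Gv))) $ n $ l $ k
      = Abs_fps (\<lambda>n. Abs_fps (\<lambda>l. Abs_fps (\<lambda>k. cc n l k))) $ n $ l $ k" .
  qed
  finally have X: "(1 + fz) * (1 + fu * fv * fz) * inverse D = Abs_fps (\<lambda>n. Abs_fps (\<lambda>l. Abs_fps (\<lambda>k. cc n l k)))" .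
  from X[unfolded D_def] show ?thesis by (rule sym)
qed



lemma FF_empty: "FF {} k l i = of_bool (PP 0 k l i)"
proof -
  have I: "Inv id {} = {{}}" unfolding Inv_def by blast
  have "FF {} k l i = ind 0 0 0 k l i" unfolding FF_def GG_def by (simp add: wt_def I)
  also have "\<dots> = of_bool (PP 0 k l i)" unfolding ind_def PP_def by auto
  finally show ?thesis .
qed

lemma FF_closed:
  assumes "finite A"
  shows "FF A k l i = fact (card A) * of_bool (PP (int (card A)) k l i)"
  using assms
proof (induction A arbitrary: k l i rule: finite_induct)
  case empty
  then show ?case by (simp add: FF_empty)
next
  case (insert a A)
  define N where "N = int (card A)"
  have "FF (insert a A) k l i = (1 - (N - k - l + i)) * FF A k l i + (k - i) * FF A (k-1) l i
     + (l - i) * FF A k (l-1) i + (2 - i) * FF A (k-1) (l-1) (i-1)"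
    unfolding N_def by (rule FF_rec[OF insert(1,2)])
  also have "\<dots> = fact (card A) * ((1 - (N-k-l+i)) * of_bool (PP N k l i) + (k - i) * of_bool (PP N (k-1) l i)
     + (l-i) * of_bool (PP N k (l-1) i) + (2-i) * of_bool (PP N (k-1) (l-1) (i-1)))"
    unfolding insert.IH N_def by (simp add: algebra_simps)
  also have "\<dots> = fact (card A) * ((N + 1) * of_bool (PP (N+1) k l i))"
    by (subst PP_rec) (simp_all add: N_def)
  also have "\<dots> = fact (card (insert a A)) * of_bool (PP (int (card (insert a A))) k l i)"
    using insert(1,2) by (simp add: N_def fact_Suc algebra_simps)
  finally show ?case .
qed


definition QQ :: "('a \<Rightarrow> 'a) \<Rightarrow> 'a set \<Rightarrow> nat \<Rightarrow> nat \<Rightarrow> int" where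
  "QQ \<sigma> A k l = (\<Sum>S\<in>Inv \<sigma> A. \<Sum>T\<in>Inv \<sigma> A. if card S = k \<and> card T = l then wt \<sigma> S T else 0)"

lemma QQ_sE:
  assumes "finite A"
  shows "of_int (sign \<sigma>) * (sE \<sigma> A k * sE \<sigma> A l) = (of_int (QQ \<sigma> A k l) :: rat)"
proof -
  have fI: "finite (Inv \<sigma> A)" by (rule finite_Inv[OF assms])
  have "sE \<sigma> A k = (\<Sum>S\<in>Inv \<sigma> A. if card S = k then of_int (sign_on S \<sigma>) else 0)"
    unfolding sE_def by (rule sum.inter_filter[OF fI])
  moreover have "sE \<sigma> A l = (\<Sum>T\<in>Inv \<sigma> A. if card T = l then of_int (sign_on T \<sigma>) else 0)"
    unfolding sE_def by (rule sum.inter_filter[OF fI])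
  ultimately have "sE \<sigma> A k * sE \<sigma> A l = (\<Sum>S\<in>Inv \<sigma> A. \<Sum>T\<in>Inv \<sigma> A.
      (if card S = k then of_int (sign_on S \<sigma>) else 0) * (if card T = l then of_int (sign_on T \<sigma>) else 0))"
    by (simp add: sum_product)
  then have "of_int (sign \<sigma>) * (sE \<sigma> A k * sE \<sigma> A l) = (\<Sum>S\<in>Inv \<sigma> A. \<Sum>T\<in>Inv \<sigma> A. of_int (sign \<sigma>) *
      ((if card S = k then of_int (sign_on S \<sigma>) else 0) * (if card T = l then of_int (sign_on T \<sigma>) else 0)))"
    by (simp add: sum_distrib_left)
  also have "\<dots> = of_int (QQ \<sigma> A k l)"
    unfolding QQ_def wt_def of_int_sum by (intro sum.cong refl) auto
  finally show ?thesis .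
qed

lemma QQ_GG:
  assumes "finite A"
  shows "(\<Sum>i\<in>{0..int (card A)}. GG \<sigma> A (int k) (int l) i) = QQ \<sigma> A k l"
proof -
  have "(\<Sum>i\<in>{0..int (card A)}. GG \<sigma> A (int k) (int l) i) = (\<Sum>S\<in>Inv \<sigma> A. \<Sum>T\<in>Inv \<sigma> A. \<Sum>i\<in>{0..int (card A)}.
      ind (int (card S)) (int (card T)) (int (card (S \<inter> T))) (int k) (int l) i * wt \<sigma> S T)"
    unfolding GG_def by (subst sum.swap) (subst (2) sum.swap, rule refl)
  also have "\<dots> = QQ \<sigma> A k l"
    unfolding QQ_def
  proof (intro sum.cong refl)
    fix S T assume S: "S \<in> Inv \<sigma> A" and T: "T \<in> Inv \<sigma> A"
    have "card (S \<inter> T) \<le> card A" using S assms unfolding Inv_def by (intro card_mono) auto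
    then have m: "int (card (S \<inter> T)) \<in> {0..int (card A)}" by simp
    have "(\<Sum>i\<in>{0..int (card A)}. ind (int (card S)) (int (card T)) (int (card (S \<inter> T))) (int k) (int l) i * wt \<sigma> S T)
       = (\<Sum>i\<in>{0..int (card A)}. if i = int (card (S \<inter> T)) then (if card S = k \<and> card T = l then wt \<sigma> S T else 0) else 0)"
      unfolding ind_def by (intro sum.cong refl) auto
    also have "\<dots> = (if card S = k \<and> card T = l then wt \<sigma> S T else 0)"
      using m by (simp add: sum.delta)
    finally show "(\<Sum>i\<in>{0..int (card A)}. ind (int (card S)) (int (card T)) (int (card (S \<inter> T))) (int k) (int l) i * wt \<sigma> S T)
       = (if card S = k \<and> card T = l then wt \<sigma> S T else 0)" .
  qed
  finally show ?thesis .
qed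

lemma PPsum:
  "(\<Sum>i\<in>{0..int n}. of_bool (PP (int n) (int k) (int l) i) :: int) = of_bool (PP (int n) (int k) (int l) 0) + of_bool (PP (int n) (int k) (int l) 1)"
proof -
  have "(\<Sum>i\<in>{0..int n}. of_bool (PP (int n) (int k) (int l) i) :: int) = (\<Sum>i\<in>{0..int n} \<inter> {0,1}. of_bool (PP (int n) (int k) (int l) i))"
    by (rule sum.mono_neutral_right) (auto simp: PP_def)
  also have "\<dots> = of_bool (PP (int n) (int k) (int l) 0) + of_bool (PP (int n) (int k) (int l) 1)"
  proof (cases "n = 0")
    case True
    then have "{0..int n} \<inter> {0,1} = {0}" by auto
    then show ?thesis using True by (simp add: PP_def)
  next
    case False
    then have "{0..int n} \<inter> {0,1} = {0,1}" by auto
    then show ?thesis by simp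
  qed
  finally show ?thesis .
qed

lemma PP_cc: "of_int (of_bool (PP (int n) (int k) (int l) 0) + of_bool (PP (int n) (int k) (int l) 1)) = cc n l k"
proof -
  have a: "of_bool (PP (int n) (int k) (int l) 0) = (of_bool (k+l=n) + of_bool (k+l+1=n) :: int)"
    unfolding PP_def by auto
  have b: "of_bool (PP (int n) (int k) (int l) 1) = (of_bool (1\<le>k \<and> 1\<le>l \<and> k+l=n+1) + of_bool (1\<le>k \<and> 1\<le>l \<and> k+l=n) :: int)"
    unfolding PP_def by auto
  show ?thesis unfolding a b cc_def by simp
qed

lemma moment_eq: "signed_moment (\<lambda>X. charE k X * charE l X) n = cc n l k"
proof -
  define A where "A = {0..<n}"
  have fin: "finite A" and cA: "card A = n" unfolding A_def by auto
  define P where "P = {\<sigma>. \<sigma> permutes A}"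
  have "(\<Sum>\<sigma>\<in>P. of_int (sign \<sigma>) * (charE k (cycle_count \<sigma> n) * charE l (cycle_count \<sigma> n)))
      = (\<Sum>\<sigma>\<in>P. (of_int (QQ \<sigma> A k l) :: rat))"
  proof (intro sum.cong refl)
    fix \<sigma> assume "\<sigma> \<in> P"
    then have p: "\<sigma> permutes A" unfolding P_def by simp
    show "of_int (sign \<sigma>) * (charE k (cycle_count \<sigma> n) * charE l (cycle_count \<sigma> n)) = (of_int (QQ \<sigma> A k l) :: rat)"
      unfolding cycle_count_ccount A_def[symmetric] lemmaA[OF fin p] by (rule QQ_sE[OF fin])
  qed
  also have "\<dots> = of_int (\<Sum>\<sigma>\<in>P. \<Sum>i\<in>{0..int n}. GG \<sigma> A (int k) (int l) i)"
  proof -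
    have "QQ \<sigma> A k l = (\<Sum>i\<in>{0..int n}. GG \<sigma> A (int k) (int l) i)" for \<sigma>
      using QQ_GG[OF fin, of \<sigma> k l] cA by simp
    then show ?thesis by (simp add: of_int_sum)
  qed
  also have "(\<Sum>\<sigma>\<in>P. \<Sum>i\<in>{0..int n}. GG \<sigma> A (int k) (int l) i) = (\<Sum>i\<in>{0..int n}. FF A (int k) (int l) i)"
    unfolding FF_def P_def by (rule sum.swap)
  also have "\<dots> = fact n * (\<Sum>i\<in>{0..int n}. of_bool (PP (int n) (int k) (int l) i))"
    unfolding FF_closed[OF fin] cA by (simp add: sum_distrib_left)
  finally have e: "(\<Sum>\<sigma>\<in>P. of_int (sign \<sigma>) * (charE k (cycle_count \<sigma> n) * charE l (cycle_count \<sigma> n)))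
     = fact n * cc n l k"
    unfolding PPsum using PP_cc[of n k l] by simp
  show ?thesis unfolding signed_moment_def A_def[symmetric] P_def[symmetric] e by simp
qed

theorem theorem3p2:
  shows "Abs_fps (\<lambda>n. Abs_fps (\<lambda>l. Abs_fps (\<lambda>k.
            signed_moment (\<lambda>X. charE k X * charE l X) n)))
         = (1 + fz) * (1 + fu * fv * fz) * inverse ((1 - fu * fz) * (1 - fv * fz))"
  unfolding moment_eq by (rule fps_part)


end
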